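(* Let $X$ be an infinite regular space. Then there exists a sequence $(G_n)_{n=1}^\infty$ of pairwise disjoint infinite open subsets of $X$.
   Context: Regular spaces are assumed to be $T_1$ (points are closed). *)

theory Defs
  imports "HOL-Analysis.Analysis"
begin

end

theory Submission
  imports Defs
begin

lemma step5p2:
  assumes H: "Hausdorff_space X" and T: "t1_space X" and W: "openin X W" "infinite W"
  shows "\<exists>A W'. openin X A \<and> A \<noteq> {} \<and> openin X W' \<and> infinite W' \<and> W' \<subseteq> W \<and> A \<subseteq> W \<and> disjnt A W'"
proof -
  obtain x where x: "x \<in> W" using W(2) by (metis finite.emptyI ex_in_conv)
  have "infinite (W - {x})" using W(2) by simp
  then obtain y where y: "y \<in> W" "y \<noteq> x" by (metis Diff_iff ex_in_conv finite.emptyI singletonI)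
  have WX: "W \<subseteq> topspace X" using W(1) openin_subset by blast
  obtain U V where UV: "openin X U" "openin X V" "x \<in> U" "y \<in> V" "disjnt U V"
    using H x y WX unfolding Hausdorff_space_def by (metis subsetD)
  define U' where "U' = U \<inter> W"
  define V' where "V' = V \<inter> W"
  have oU: "openin X U'" "openin X V'" using UV W(1) U'_def V'_def by auto
  have ne: "U' \<noteq> {}" "V' \<noteq> {}" using UV x y U'_def V'_def by auto
  have dj: "disjnt U' V'" using UV(5) U'_def V'_def by (auto simp: disjnt_def)
  show ?thesis
  proof (cases "infinite U'")
    case True
    then show ?thesis using oU ne dj U'_def V'_def
      by (metis Int_lower2 disjnt_sym)
  next
    case fU: False
    show ?thesis
    proof (cases "infinite V'")
      case True
      then show ?thesis using oU ne dj U'_def V'_def by (metis Int_lower2)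
    next
      case False
      have "closedin X U'" using T fU WX U'_def unfolding t1_space_closedin_finite by auto
      then have "openin X (W - U')" using W(1) by (simp add: openin_diff)
      moreover have "infinite (W - U')" using W(2) fU by simp
      ultimately show ?thesis using oU ne U'_def
        by (intro exI[of _ U'] exI[of _ "W - U'"]) (auto simp: disjnt_def)
    qed
  qed
qed

theorem lemma5p2:
  fixes X :: "'a topology"
  assumes "t1_space X" and "regular_space X" and "infinite (topspace X)"
  shows "\<exists>G :: nat \<Rightarrow> 'a set. (\<forall>n. openin X (G n) \<and> infinite (G n)) \<and>
           (\<forall>m n. m \<noteq> n \<longrightarrow> disjnt (G m) (G n))"
proof -
  have H: "Hausdorff_space X" using assms regular_t1_imp_Hausdorff_space by blast
  define P where "P = (\<lambda>W (A, W'). openin X A \<and> A \<noteq> {} \<and> openin X W' \<and> infinite W' \<and> W' \<subseteq> W \<and> A \<subseteq> W \<and> disjnt A W')"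
  have "\<forall>W. \<exists>p. openin X W \<and> infinite W \<longrightarrow> P W p"
    using step5p2[OF H assms(1)] unfolding P_def by fastforce
  then obtain f where f: "\<And>W. openin X W \<Longrightarrow> infinite W \<Longrightarrow> P W (f W)" by metis
  define Ws where "Ws = rec_nat (topspace X) (\<lambda>_ W. snd (f W))"
  have Ws0: "Ws 0 = topspace X" and WsS: "\<And>n. Ws (Suc n) = snd (f (Ws n))" by (simp_all add: Ws_def)
  define Hs where "Hs n = fst (f (Ws n))" for n
  have inv: "openin X (Ws n) \<and> infinite (Ws n)" for n
  proof (induction n)
    case 0 then show ?case using assms(3) Ws0 by simp
  next
    case (Suc n)
    then have "P (Ws n) (f (Ws n))" using f by blast
    then show ?case unfolding P_def WsS by (cases "f (Ws n)") auto
  qed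
  have Pn: "P (Ws n) (Hs n, Ws (Suc n))" for n
    using f[OF conjunct1[OF inv[of n]] conjunct2[OF inv[of n]]] by (simp add: Hs_def WsS)
  have Hopen: "openin X (Hs n)" and Hne: "Hs n \<noteq> {}" for n using Pn[of n] unfolding P_def by auto
  have mono: "Ws (n + k) \<subseteq> Ws n" for n k
  proof (induction k)
    case 0 then show ?case by simp
  next
    case (Suc k)
    have "Ws (Suc (n + k)) \<subseteq> Ws (n + k)" using Pn[of "n+k"] unfolding P_def by auto
    then show ?case using Suc by simp
  qed
  have djlt: "disjnt (Hs n) (Hs m)" if "n < m" for n m
  proof -
    obtain k where m: "m = Suc n + k" using \<open>n < m\<close> less_iff_Suc_add by auto
    have "Hs m \<subseteq> Ws m" using Pn[of m] unfolding P_def by auto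
    also have "\<dots> \<subseteq> Ws (Suc n)" using mono[of "Suc n" k] m by simp
    finally show ?thesis using Pn[of n] unfolding P_def by (auto simp: disjnt_def)
  qed
  have dj: "disjnt (Hs n) (Hs m)" if "n \<noteq> m" for n m
    using djlt that by (metis disjnt_sym linorder_neqE_nat)
  define G where "G n = (\<Union>j. Hs (prod_encode (n, j)))" for n
  have "openin X (G n)" for n unfolding G_def using Hopen by auto
  moreover have "infinite (G n)" for n
  proof
    assume fin: "finite (G n)"
    define p where "p j = (SOME x. x \<in> Hs (prod_encode (n, j)))" for j
    have p: "p j \<in> Hs (prod_encode (n, j))" for j
      unfolding p_def using Hne by (metis ex_in_conv someI)
    have "inj p"
    proof (rule injI)
      fix i j assume "p i = p j"
      then have "\<not> disjnt (Hs (prod_encode (n, i))) (Hs (prod_encode (n, j)))"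
        using p by (metis disjnt_iff)
      then have "prod_encode (n, i) = prod_encode (n, j)" using dj by blast
      then show "i = j" using inj_prod_encode by (metis prod_encode_eq prod.inject)
    qed
    moreover have "range p \<subseteq> G n" unfolding G_def using p by auto
    ultimately show False using fin by (metis finite_imageD finite_subset infinite_UNIV_nat)
  qed
  moreover have "disjnt (G m) (G n)" if "m \<noteq> n" for m n
    unfolding G_def disjnt_def
  proof (auto)
    fix x i j assume "x \<in> Hs (prod_encode (m, i))" "x \<in> Hs (prod_encode (n, j))"
    moreover have "prod_encode (m, i) \<noteq> prod_encode (n, j)" using that by (simp add: prod_encode_eq)
    ultimately show False using dj by (metis disjnt_iff)
  qed
  ultimately show ?thesis by blast
qed

end
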